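(* Let $n\ge 6$ and let $CTG_n$ be the set of chemical tricyclic graphs on $n$ vertices. Define the following subsets of $CTG_n$ (in each, all $m_{i,j}$ not listed are $0$): for $j=0,1,\dots,5$, $\gamma_{9+j}$ is the set of $G\in CTG_n$ with $n_4=0,n_3=4,n_2=n-4,n_1=0$, $m_{2,3}=2+2j$, $m_{3,3}=5-j$, $m_{2,2}=n-5-j$; and $\gamma_{65}$ is the set of $G\in CTG_n$ with $n_4=0,n_3=5,n_2=n-6,n_1=1$, $m_{1,2}=1$, $m_{2,3}=1$, $m_{3,3}=7$, $m_{2,2}=n-7$. Let $G_1\in\gamma_9$, $G_2\in\gamma_{10}$, $G_3\in\gamma_{11}$, $G_4\in\gamma_{12}$, $G_5\in\gamma_{13}$, $G_6\in\gamma_{14}$, $G_7\in\gamma_{65}$, and let $G\in CTG_n$ not belong to $\gamma_9\cup\cdots\cup\gamma_{14}\cup\gamma_{65}$. Then $SO_{red}(G_1)<SO_{red}(G_2)<\cdots<SO_{red}(G_7)<SO_{red}(G)$.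
   Context: All graphs are simple and connected. A chemical graph is a graph with maximum degree at most $4$; a tricyclic graph is a connected graph with $n$ vertices and $n+2$ edges. $d_G(u)$ is the degree of $u$, $n_i$ the number of vertices of degree $i$, and $m_{i,j}$ the number of edges joining a vertex of degree $i$ to a vertex of degree $j$. The reduced Sombor index is $SO_{red}(G)=\sum_{uv\in E(G)}\sqrt{(d_G(u)-1)^2+(d_G(v)-1)^2}$. *)

theory Defs
  imports Complex_Main
begin

type_synonym 'a graph = "'a set \<times> 'a set set"

definition simple_graph :: "'a graph \<Rightarrow> bool" where
  "simple_graph G \<longleftrightarrow> finite (fst G) \<and> (\<forall>e\<in>snd G. e \<subseteq> fst G \<and> card e = 2)"

definition adj_rel :: "'a graph \<Rightarrow> ('a \<times> 'a) set" where
  "adj_rel G = {(u, v). {u, v} \<in> snd G}"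

definition connected_graph :: "'a graph \<Rightarrow> bool" where
  "connected_graph G \<longleftrightarrow> simple_graph G \<and> fst G \<noteq> {} \<and>
     (\<forall>u\<in>fst G. \<forall>v\<in>fst G. (u, v) \<in> (adj_rel G)\<^sup>*)"

definition deg :: "'a graph \<Rightarrow> 'a \<Rightarrow> nat" where
  "deg G v = card {e \<in> snd G. v \<in> e}"

definition nv :: "'a graph \<Rightarrow> nat \<Rightarrow> nat" where
  "nv G i = card {v \<in> fst G. deg G v = i}"

definition me :: "'a graph \<Rightarrow> nat \<Rightarrow> nat \<Rightarrow> nat" where
  "me G i j = card {e \<in> snd G. deg G ` e = {i, j}}"

definition chemical :: "'a graph \<Rightarrow> bool" where
  "chemical G \<longleftrightarrow> (\<forall>v\<in>fst G. deg G v \<le> 4)"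

definition tricyclic :: "'a graph \<Rightarrow> bool" where
  "tricyclic G \<longleftrightarrow> connected_graph G \<and> card (snd G) = card (fst G) + 2"

definition CTG :: "nat \<Rightarrow> 'a graph \<Rightarrow> bool" where
  "CTG n G \<longleftrightarrow> tricyclic G \<and> chemical G \<and> card (fst G) = n"

text \<open>Reduced Sombor index: for an edge e = {u,v} (u \<noteq> v) the summand is
  sqrt((d u - 1)^2 + (d v - 1)^2) = sqrt(\<Sum>x\<in>e. (d x - 1)^2).\<close>
definition SO_red :: "'a graph \<Rightarrow> real" where
  "SO_red G = (\<Sum>e\<in>snd G. sqrt (\<Sum>x\<in>e. (real (deg G x) - 1)^2))"

definition gamma9 :: "nat \<Rightarrow> nat \<Rightarrow> 'a graph \<Rightarrow> bool" where
  "gamma9 n j G \<longleftrightarrow> CTG n G \<and>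
     nv G 4 = 0 \<and> nv G 3 = 4 \<and> int (nv G 2) = int n - 4 \<and> nv G 1 = 0 \<and>
     int (me G 2 3) = 2 + 2 * int j \<and> int (me G 3 3) = 5 - int j \<and>
     int (me G 2 2) = int n - 5 - int j \<and>
     (\<forall>a b. {a, b} \<notin> {{2,3}, {3,3}, {2,2}} \<longrightarrow> me G a b = 0)"

definition gamma65 :: "nat \<Rightarrow> 'a graph \<Rightarrow> bool" where
  "gamma65 n G \<longleftrightarrow> CTG n G \<and>
     nv G 4 = 0 \<and> nv G 3 = 5 \<and> int (nv G 2) = int n - 6 \<and> nv G 1 = 1 \<and>
     me G 1 2 = 1 \<and> me G 2 3 = 1 \<and> me G 3 3 = 7 \<and> int (me G 2 2) = int n - 7 \<and>
     (\<forall>a b. {a, b} \<notin> {{1,2}, {2,3}, {3,3}, {2,2}} \<longrightarrow> me G a b = 0)"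

end

theory Submission
  imports Defs
begin

definition PP :: "(nat \<times> nat) set" where
 "PP = {(1,1),(1,2),(1,3),(1,4),(2,2),(2,3),(2,4),(3,3),(3,4),(4,4)}"
lemma four: "(a::nat) \<in> {1..4} \<Longrightarrow> a = 1 \<or> a = 2 \<or> a = 3 \<or> a = 4" by auto
lemma PP_mem: "a \<le> b \<Longrightarrow> a \<in> {1..4} \<Longrightarrow> b \<in> {1..4} \<Longrightarrow> (a::nat, b) \<in> PP"
  apply (drule four)+ unfolding PP_def by (elim disjE; simp)
lemma inj_PP: "inj_on (\<lambda>(a,b). {a,b}) PP"
  unfolding PP_def inj_on_def by (simp add: doubleton_eq_iff)
lemma types_in: assumes "(a::nat) \<in> {1..4}" "b \<in> {1..4}" shows "{a,b} \<in> (\<lambda>(a,b). {a,b}) ` PP"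
proof (cases "a \<le> b")
  case True
  then have "(a,b) \<in> PP" using PP_mem assms by simp
  moreover have "{a,b} = (\<lambda>(a,b). {a,b}) (a,b)" by simp
  ultimately show ?thesis by (rule rev_image_eqI)
next
  case False
  then have "(b,a) \<in> PP" using PP_mem assms by simp
  moreover have "{a,b} = (\<lambda>(a,b). {a,b}) (b,a)" by (simp add: insert_commute)
  ultimately show ?thesis by (rule rev_image_eqI)
qed

lemma finite_E: "simple_graph G \<Longrightarrow> finite (snd G)"
  unfolding simple_graph_def by (meson PowI finite_Pow_iff finite_subset subsetI)

lemma edge_form: "simple_graph G \<Longrightarrow> e \<in> snd G \<Longrightarrow> \<exists>u v. u \<noteq> v \<and> e = {u,v} \<and> u \<in> fst G \<and> v \<in> fst G"
  unfolding simple_graph_def by (metis card_2_iff insert_subset)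

lemma deg_ge1: assumes "simple_graph G" "e \<in> snd G" "v \<in> e" shows "1 \<le> deg G v"
proof -
  have "finite {e\<in>snd G. v\<in>e}" using finite_E[OF assms(1)] by auto
  moreover have "e \<in> {e\<in>snd G. v\<in>e}" using assms by auto
  ultimately show ?thesis unfolding deg_def by (metis card_0_eq empty_iff less_one not_le)
qed

lemma deg_le4: assumes "simple_graph G" "chemical G" "e \<in> snd G" "v \<in> e" shows "deg G v \<le> 4"
  using assms unfolding simple_graph_def chemical_def by blast

lemma type_in: assumes "simple_graph G" "chemical G" "e \<in> snd G"
  shows "deg G ` e \<in> (\<lambda>(a,b). {a,b}) ` PP"
proof -
  obtain u v where e: "u \<noteq> v" "e = {u,v}" using edge_form[OF assms(1,3)] by blast
  have "deg G u \<in> {1..4}" "deg G v \<in> {1..4}"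
    using deg_ge1[OF assms(1,3)] deg_le4[OF assms] e by auto
  then show ?thesis using e types_in by simp
qed

lemma sum_types:
  fixes \<phi> :: "nat set \<Rightarrow> 'b::comm_semiring_1"
  assumes "simple_graph G" "chemical G"
  shows "(\<Sum>e\<in>snd G. \<phi> (deg G ` e)) = (\<Sum>(a,b)\<in>PP. of_nat (me G a b) * \<phi> {a,b})"
proof -
  let ?T = "(\<lambda>(a,b). {a::nat,b}) ` PP"
  have fE: "finite (snd G)" using finite_E assms by blast
  have fT: "finite ?T" by (simp add: PP_def)
  have sub: "(\<lambda>e. deg G ` e) ` snd G \<subseteq> ?T" using type_in assms by blast
  have "(\<Sum>e\<in>snd G. \<phi> (deg G ` e)) = (\<Sum>S\<in>?T. \<Sum>e\<in>{e\<in>snd G. deg G ` e = S}. \<phi> (deg G ` e))"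
    using sum.group[OF fE fT sub, of "\<lambda>e. \<phi> (deg G ` e)"] by simp
  also have "\<dots> = (\<Sum>S\<in>?T. of_nat (card {e\<in>snd G. deg G ` e = S}) * \<phi> S)"
  proof (rule sum.cong[OF refl])
    fix S
    have "(\<Sum>e\<in>{e\<in>snd G. deg G ` e = S}. \<phi> (deg G ` e)) = (\<Sum>e\<in>{e\<in>snd G. deg G ` e = S}. \<phi> S)"
      by (rule sum.cong) auto
    then show "(\<Sum>e\<in>{e\<in>snd G. deg G ` e = S}. \<phi> (deg G ` e)) = of_nat (card {e\<in>snd G. deg G ` e = S}) * \<phi> S"
      by simp
  qed
  also have "\<dots> = (\<Sum>(a,b)\<in>PP. of_nat (card {e\<in>snd G. deg G ` e = {a,b}}) * \<phi> {a,b})"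
    using sum.reindex[OF inj_PP, of "\<lambda>S. of_nat (card {e\<in>snd G. deg G ` e = S}) * \<phi> S"]
    by (simp add: case_prod_unfold comp_def)
  finally show ?thesis by (simp add: me_def)
qed

definition phiSO :: "nat set \<Rightarrow> real" where
  "phiSO S = sqrt (if card S = 1 then 2 * (real (the_elem S) - 1)^2 else \<Sum>d\<in>S. (real d - 1)^2)"

lemma SO_summand: assumes "simple_graph G" "e \<in> snd G"
  shows "sqrt (\<Sum>x\<in>e. (real (deg G x) - 1)^2) = phiSO (deg G ` e)"
proof -
  obtain u v where e: "u \<noteq> v" "e = {u,v}" using edge_form[OF assms] by blast
  show ?thesis
  proof (cases "deg G u = deg G v")
    case True then show ?thesis using e by (simp add: phiSO_def)
  next
    case False then show ?thesis using e by (simp add: phiSO_def)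
  qed
qed

lemma sqrt4: "sqrt 4 = 2" by (rule real_sqrt_unique) simp_all
lemma sqrt9: "sqrt 9 = 3" by (rule real_sqrt_unique) simp_all
lemma sqrt8: "sqrt 8 = 2 * sqrt 2" by (rule real_sqrt_unique) (simp_all add: power_mult_distrib)
lemma sqrt18: "sqrt 18 = 3 * sqrt 2" by (rule real_sqrt_unique) (simp_all add: power_mult_distrib)

lemma SO_formula: assumes "simple_graph G" "chemical G"
  shows "SO_red G = real (me G 1 2) + 2 * real (me G 1 3) + 3 * real (me G 1 4)
     + real (me G 2 2) * sqrt 2 + real (me G 2 3) * sqrt 5 + real (me G 2 4) * sqrt 10
     + real (me G 3 3) * (2 * sqrt 2) + real (me G 3 4) * sqrt 13 + real (me G 4 4) * (3 * sqrt 2)"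
proof -
  have "SO_red G = (\<Sum>e\<in>snd G. phiSO (deg G ` e))"
    unfolding SO_red_def using SO_summand[OF assms(1)] by (intro sum.cong) auto
  also have "\<dots> = (\<Sum>(a,b)\<in>PP. of_nat (me G a b) * phiSO {a,b})"
    by (rule sum_types[OF assms])
  finally show ?thesis
    by (simp add: PP_def phiSO_def sqrt4 sqrt9 sqrt8 sqrt18 algebra_simps)
qed
lemma cardE_formula: assumes "simple_graph G" "chemical G"
  shows "card (snd G) = me G 1 1 + me G 1 2 + me G 1 3 + me G 1 4 + me G 2 2 + me G 2 3 + me G 2 4
     + me G 3 3 + me G 3 4 + me G 4 4"
proof -
  have "card (snd G) = (\<Sum>e\<in>snd G. (\<lambda>S. 1::nat) (deg G ` e))" by simp
  also have "\<dots> = (\<Sum>(a,b)\<in>PP. of_nat (me G a b) * (\<lambda>S. 1::nat) {a,b})"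
    by (rule sum_types[OF assms])
  finally show ?thesis by (simp add: PP_def)
qed

lemma dc: assumes "finite A" "finite E"
  shows "(\<Sum>v\<in>A. card {e\<in>E. v\<in>e}) = (\<Sum>e\<in>E. card {v\<in>A. v\<in>e})"
proof -
  have 1: "card {e\<in>E. v\<in>e} = (\<Sum>e\<in>E. if v\<in>e then 1 else 0)" for v
    using assms(2) by (simp add: sum.If_cases Int_def)
  have 2: "card {v\<in>A. v\<in>e} = (\<Sum>v\<in>A. if v\<in>e then 1 else 0)" for e
    using assms(1) by (simp add: sum.If_cases Int_def)
  show ?thesis unfolding 1 2 by (rule sum.swap)
qed

definition kap :: "nat \<Rightarrow> nat set \<Rightarrow> nat" where
  "kap i S = (if i \<in> S then (if card S = 1 then 2 else 1) else 0)"

lemma kap_summand: assumes "simple_graph G" "e \<in> snd G"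
  shows "card {v\<in>{v\<in>fst G. deg G v = i}. v\<in>e} = kap i (deg G ` e)"
proof -
  obtain u v where e: "u \<noteq> v" "e = {u,v}" "u \<in> fst G" "v \<in> fst G" using edge_form[OF assms] by blast
  have s: "{x\<in>{v\<in>fst G. deg G v = i}. x\<in>e} = {x\<in>{u,v}. deg G x = i}" using e by auto
  have img: "deg G ` e = {deg G u, deg G v}" using e by simp
  show ?thesis
  proof (cases "deg G u = i")
    case T1: True
    show ?thesis
    proof (cases "deg G v = i")
      case True
      have "{x\<in>{u,v}. deg G x = i} = {u,v}" using T1 True by auto
      moreover have "deg G ` e = {i}" using img T1 True by simp
      ultimately show ?thesis unfolding s kap_def using e(1) by simp
    next
      case False
      have "{x\<in>{u,v}. deg G x = i} = {u}" using T1 False by auto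
      moreover have "deg G ` e = {i, deg G v}" using img T1 by simp
      ultimately show ?thesis unfolding s kap_def using False by simp
    qed
  next
    case F1: False
    show ?thesis
    proof (cases "deg G v = i")
      case True
      have "{x\<in>{u,v}. deg G x = i} = {v}" using F1 True by auto
      moreover have "deg G ` e = {deg G u, i}" using img True by simp
      ultimately show ?thesis unfolding s kap_def using F1 by simp
    next
      case False
      have "{x\<in>{u,v}. deg G x = i} = {}" using F1 False by auto
      moreover have "i \<notin> deg G ` e" using img F1 False by simp
      ultimately show ?thesis unfolding s kap_def by simp
    qed
  qed
qed

lemma hand: assumes "simple_graph G" "chemical G"
  shows "i * nv G i = (\<Sum>(a,b)\<in>PP. me G a b * kap i {a,b})"
proof -
  let ?A = "{v\<in>fst G. deg G v = i}"
  have fA: "finite ?A" using assms(1) unfolding simple_graph_def by auto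
  have "(\<Sum>v\<in>?A. deg G v) = (\<Sum>v\<in>?A. i)" by (rule sum.cong) auto
  then have "i * nv G i = (\<Sum>v\<in>?A. deg G v)" unfolding nv_def by (simp add: mult.commute)
  also have "\<dots> = (\<Sum>v\<in>?A. card {e\<in>snd G. v\<in>e})" unfolding deg_def by simp
  also have "\<dots> = (\<Sum>e\<in>snd G. card {v\<in>?A. v\<in>e})" by (rule dc[OF fA finite_E[OF assms(1)]])
  also have "\<dots> = (\<Sum>e\<in>snd G. kap i (deg G ` e))"
    by (rule sum.cong[OF refl], rule kap_summand[OF assms(1)], assumption)
  also have "\<dots> = (\<Sum>(a,b)\<in>PP. of_nat (me G a b) * kap i {a,b})"
    by (rule sum_types[OF assms])
  finally show ?thesis by (simp only: of_nat_id)
qed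

lemma hand1: "simple_graph G \<Longrightarrow> chemical G \<Longrightarrow> nv G 1 = 2 * me G 1 1 + me G 1 2 + me G 1 3 + me G 1 4"
  using hand[of G 1] by (simp add: PP_def kap_def)
lemma hand2: "simple_graph G \<Longrightarrow> chemical G \<Longrightarrow> 2 * nv G 2 = me G 1 2 + 2 * me G 2 2 + me G 2 3 + me G 2 4"
  using hand[of G 2] by (simp add: PP_def kap_def)
lemma hand3: "simple_graph G \<Longrightarrow> chemical G \<Longrightarrow> 3 * nv G 3 = me G 1 3 + me G 2 3 + 2 * me G 3 3 + me G 3 4"
  using hand[of G 3] by (simp add: PP_def kap_def)
lemma hand4: "simple_graph G \<Longrightarrow> chemical G \<Longrightarrow> 4 * nv G 4 = me G 1 4 + me G 2 4 + me G 3 4 + 2 * me G 4 4"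
  using hand[of G 4] by (simp add: PP_def kap_def)

lemma cross: assumes "(u,w) \<in> R\<^sup>*" "u \<in> A" "w \<notin> A" shows "\<exists>x y. (x,y) \<in> R \<and> x \<in> A \<and> y \<notin> A"
  using assms by (induction rule: rtrancl_induct) auto

lemma deg_pos_vertex: assumes "connected_graph G" "v \<in> fst G" "w \<in> fst G" "v \<noteq> w"
  shows "1 \<le> deg G v"
proof -
  have sg: "simple_graph G" using assms(1) connected_graph_def by blast
  have path: "(v,w) \<in> (adj_rel G)\<^sup>*" using assms unfolding connected_graph_def by blast
  have "w \<notin> {v}" using assms(4) by simp
  then obtain x y where xy: "(x,y) \<in> adj_rel G" "x \<in> {v}" "y \<notin> {v}"
    using cross[OF path singletonI] by blast
  then have "{v,y} \<in> snd G" unfolding adj_rel_def by simp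
  then show ?thesis using deg_ge1[OF sg] by blast
qed

lemma vert_partition: assumes "connected_graph G" "chemical G" "2 \<le> card (fst G)"
  shows "card (fst G) = nv G 1 + nv G 2 + nv G 3 + nv G 4"
proof -
  have sg: "simple_graph G" using assms(1) connected_graph_def by blast
  have fV: "finite (fst G)" using sg simple_graph_def by blast
  have "deg G v \<in> {1,2,3,4}" if v: "v \<in> fst G" for v
  proof -
    have "\<not> fst G \<subseteq> {v}"
    proof
      assume "fst G \<subseteq> {v}"
      then have "card (fst G) \<le> card {v}" by (intro card_mono) simp_all
      then show False using assms(3) by simp
    qed
    then obtain w where "w \<in> fst G" "w \<noteq> v" by blast
    then have "1 \<le> deg G v" using deg_pos_vertex[OF assms(1) v] by blast
    moreover have "deg G v \<le> 4" using assms(2) v unfolding chemical_def by blast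
    ultimately show ?thesis using four[of "deg G v"] by simp
  qed
  then have sub: "deg G ` fst G \<subseteq> {1,2,3,4}" by blast
  have fT: "finite {1::nat,2,3,4}" by simp
  have "(\<Sum>y\<in>{1,2,3,4}. card {v\<in>fst G. deg G v = y}) = card (fst G)"
    using sum.group[OF fV fT sub, of "\<lambda>_. 1::nat"] by simp
  then show ?thesis unfolding nv_def by (simp add: add.assoc)
qed

lemma me_sym: "me G a b = me G b a" by (simp add: me_def insert_commute)

lemma me_le_mult: assumes "simple_graph G" "a \<noteq> b" shows "me G a b \<le> nv G a * nv G b"
proof -
  let ?Va = "{v\<in>fst G. deg G v = a}" and ?Vb = "{v\<in>fst G. deg G v = b}"
  let ?f = "\<lambda>(u,v). {u,v}"
  have fV: "finite (fst G)" using assms(1) simple_graph_def by blast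
  have fP: "finite (?Va \<times> ?Vb)" using fV by simp
  have "{e\<in>snd G. deg G ` e = {a,b}} \<subseteq> ?f ` (?Va \<times> ?Vb)"
  proof
    fix e assume e: "e \<in> {e\<in>snd G. deg G ` e = {a,b}}"
    then have eE: "e \<in> snd G" and de: "deg G ` e = {a,b}" by simp_all
    obtain u v where uv: "u \<noteq> v" "e = {u,v}" "u \<in> fst G" "v \<in> fst G"
      using edge_form[OF assms(1) eE] by blast
    have "{deg G u, deg G v} = {a,b}" using de uv(2) by simp
    then have "(deg G u = a \<and> deg G v = b) \<or> (deg G u = b \<and> deg G v = a)" by (simp add: doubleton_eq_iff)
    then show "e \<in> ?f ` (?Va \<times> ?Vb)"
    proof
      assume d: "deg G u = a \<and> deg G v = b"
      have m: "(u,v) \<in> ?Va \<times> ?Vb" using d uv(3,4) by simp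
      have q: "e = ?f (u,v)" using uv(2) by simp
      show ?thesis using q m by blast
    next
      assume d: "deg G u = b \<and> deg G v = a"
      have m: "(v,u) \<in> ?Va \<times> ?Vb" using d uv(3,4) by simp
      have q: "e = ?f (v,u)" using uv(2) by (simp add: insert_commute)
      show ?thesis using q m by blast
    qed
  qed
  then have "me G a b \<le> card (?f ` (?Va \<times> ?Vb))"
    unfolding me_def by (rule card_mono[OF finite_imageI[OF fP]])
  also have "\<dots> \<le> card (?Va \<times> ?Vb)" by (rule card_image_le[OF fP])
  also have "\<dots> = nv G a * nv G b" by (simp only: card_cartesian_product nv_def)
  finally show ?thesis .
qed

lemma me_le_choose: assumes "simple_graph G" shows "me G a a \<le> nv G a choose 2"
proof -
  let ?Va = "{v\<in>fst G. deg G v = a}"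
  have fV: "finite (fst G)" using assms(1) simple_graph_def by blast
  have "{e\<in>snd G. deg G ` e = {a,a}} \<subseteq> {B. B \<subseteq> ?Va \<and> card B = 2}"
  proof
    fix e assume e: "e \<in> {e\<in>snd G. deg G ` e = {a,a}}"
    then have 1: "e \<subseteq> fst G" "card e = 2" using assms unfolding simple_graph_def by auto
    have "deg G x = a" if "x \<in> e" for x
    proof -
      have "deg G x \<in> deg G ` e" using that by (rule imageI)
      then show ?thesis using e by simp
    qed
    then show "e \<in> {B. B \<subseteq> ?Va \<and> card B = 2}" using 1 by auto
  qed
  then have "me G a a \<le> card {B. B \<subseteq> ?Va \<and> card B = 2}"
    unfolding me_def using fV by (intro card_mono) auto
  also have "\<dots> = nv G a choose 2" using fV by (simp add: n_subsets nv_def)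
  finally show ?thesis .
qed

lemma me_nz: assumes "simple_graph G" "chemical G" "me G a b \<noteq> 0"
  shows "a \<in> {1..4} \<and> b \<in> {1..4}"
proof -
  have "{e\<in>snd G. deg G ` e = {a,b}} \<noteq> {}" using assms(3) unfolding me_def by (metis card.empty)
  then obtain e where e: "e \<in> snd G" "deg G ` e = {a,b}" by blast
  have "a \<in> deg G ` e" "b \<in> deg G ` e" using e by auto
  then show ?thesis using deg_ge1[OF assms(1) e(1)] deg_le4[OF assms(1,2) e(1)] by auto
qed

lemma conn3: assumes "connected_graph G" "chemical G" "0 < nv G 3" "nv G 3 < card (fst G)"
  shows "1 \<le> me G 1 3 + me G 2 3 + me G 3 4"
proof -
  have sg: "simple_graph G" using assms(1) connected_graph_def by blast
  let ?A = "{v\<in>fst G. deg G v = 3}"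
  have "?A \<noteq> {}" using assms(3) unfolding nv_def by (metis card.empty less_irrefl)
  then obtain u where u: "u \<in> ?A" by blast
  have "?A \<noteq> fst G" using assms(4) unfolding nv_def by (metis less_irrefl)
  then obtain w where w: "w \<in> fst G" "w \<notin> ?A" by blast
  have "(u,w) \<in> (adj_rel G)\<^sup>*" using u w assms(1) unfolding connected_graph_def by blast
  then obtain x y where xy: "(x,y) \<in> adj_rel G" "x \<in> ?A" "y \<notin> ?A" using cross[OF _ u w(2)] by blast
  have eE: "{x,y} \<in> snd G" using xy unfolding adj_rel_def by auto
  have "y \<in> fst G" using eE sg unfolding simple_graph_def by blast
  then have dy: "deg G y \<noteq> 3" using xy by auto
  have "deg G y \<in> {1..4}" using deg_ge1[OF sg eE] deg_le4[OF sg assms(2) eE] by auto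
  with dy have dys: "deg G y = 1 \<or> deg G y = 2 \<or> deg G y = 4" by auto
  have img: "deg G ` {x,y} = {3, deg G y}" using xy by auto
  have fE: "finite (snd G)" using finite_E[OF sg] .
  have pos: "1 \<le> me G d 3" if "deg G y = d" for d
  proof -
    have "{x,y} \<in> {e\<in>snd G. deg G ` e = {d,3}}" using eE img that by (auto simp: insert_commute)
    moreover have "finite {e\<in>snd G. deg G ` e = {d,3}}" using fE by simp
    ultimately have "0 < card {e\<in>snd G. deg G ` e = {d,3}}" using card_gt_0_iff by blast
    then show ?thesis unfolding me_def by simp
  qed
  show ?thesis using dys pos[of 1] pos[of 2] pos[of 4] me_sym[of G 4 3] by auto
qed

lemma core:
  fixes n n1 n2 n3 n4 m11 m12 m13 m14 m22 m23 m24 m33 m34 m44 :: nat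
  assumes V: "n = n1+n2+n3+n4" and Ec: "n+2 = m11+m12+m13+m14+m22+m23+m24+m33+m34+m44"
    and n6: "6 \<le> n"
    and h1: "n1 = 2*m11+m12+m13+m14" and h2: "2*n2 = m12+2*m22+m23+m24"
    and h3: "3*n3 = m13+m23+2*m33+m34" and h4: "4*n4 = m14+m24+m34+2*m44"
    and b44: "m44 \<le> n4 choose 2" and b34: "m34 \<le> n3*n4" and b33: "m33 \<le> n3 choose 2"
    and c3: "0 < n3 \<Longrightarrow> n3 < n \<Longrightarrow> 1 \<le> m13+m23+m34"
    and W: "2828*m11+1707*m12+2000*m13+2646*m14+114*m23+687*m24+423*m34+707*m44 \<le> 1822"
  shows "(\<exists>j\<le>5. n4=0 \<and> n3=4 \<and> n2+4=n \<and> n1=0 \<and> m23=2+2*j \<and> m33+j=5 \<and> m22+5+j=n \<and>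
            m11=0 \<and> m12=0 \<and> m13=0 \<and> m14=0 \<and> m24=0 \<and> m34=0 \<and> m44=0)
       \<or> (n4=0 \<and> n3=5 \<and> n2+6=n \<and> n1=1 \<and> m12=1 \<and> m23=1 \<and> m33=7 \<and> m22+7=n \<and>
            m11=0 \<and> m13=0 \<and> m14=0 \<and> m24=0 \<and> m34=0 \<and> m44=0)"
proof -
  have key: "n3 + 2*n4 = 4 + n1" using V Ec h1 h2 h3 h4 by linarith
  have "\<not> 2 \<le> n1" using h1 W by linarith
  then have "n1 = 0 \<or> n1 = 1" by arith
  then show ?thesis
  proof
    assume n1: "n1 = 0"
    then have z: "m11 = 0" "m12 = 0" "m13 = 0" "m14 = 0" using h1 by auto
    have "n4 = 0 \<or> n4 = 1 \<or> n4 = 2" using key n1 by arith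
    moreover have False if "n4 = 2"
    proof -
      have "n3 = 0" using key n1 that by arith
      then have "m44 \<le> 1" "m34 = 0" using b44 b34 that by (auto simp: numeral_2_eq_2)
      then show False using h4 W z that by linarith
    qed
    moreover have False if "n4 = 1"
    proof -
      have "n3 = 2" using key n1 that by arith
      then have "m44 = 0" "m34 \<le> 2" using b44 b34 that by (auto simp: numeral_2_eq_2)
      then show False using h4 W z that by linarith
    qed
    moreover have ?thesis if n4: "n4 = 0"
    proof -
      have n3: "n3 = 4" using key n1 n4 by arith
      have z2: "m24 = 0" "m34 = 0" "m44 = 0" using h4 n4 z by auto
      have "m33 \<le> 6" using b33 n3 by (simp add: numeral_eq_Suc)
      have "1 \<le> m23" using c3 n3 n6 z z2 by auto
      have h3': "12 = m23 + 2*m33" using h3 n3 z z2 by simp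
      have "m33 \<le> 5" using h3' \<open>1 \<le> m23\<close> by arith
      show ?thesis
        apply (rule disjI1, rule exI[of _ "5 - m33"])
        using V Ec h3' \<open>m33 \<le> 5\<close> n1 n3 n4 z z2 by arith
    qed
    ultimately show ?thesis by blast
  next
    assume n1: "n1 = 1"
    have z: "m11 = 0" using h1 n1 by arith
    have "\<not> 1 \<le> m13" "\<not> 1 \<le> m14" using W by linarith+
    then have z1: "m13 = 0" "m14 = 0" by auto
    have m12: "m12 = 1" using h1 n1 z z1 by arith
    have "\<not> 1 \<le> n4" using h4 W z1 m12 by linarith
    then have n4: "n4 = 0" by simp
    have n3: "n3 = 5" using key n1 n4 by arith
    have z2: "m24 = 0" "m34 = 0" "m44 = 0" using h4 n4 z1 by auto
    have h3': "15 = m23 + 2*m33" using h3 n3 z1 z2 by simp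
    have "\<not> 2 \<le> m23" using W m12 by linarith
    then have m23: "m23 = 1" using h3' by arith
    then have m33: "m33 = 7" using h3' by arith
    show ?thesis
      apply (rule disjI2)
      using V Ec m23 m33 m12 n1 n3 n4 z z1 z2 by arith
  qed
qed

lemma ctg_facts: assumes "CTG n G"
  shows "simple_graph G" "chemical G" "connected_graph G" "card (snd G) = n + 2" "card (fst G) = n"
  using assms unfolding CTG_def tricyclic_def connected_graph_def by auto

lemma s2l: "(141421/100000::real) < sqrt 2" by (rule real_less_rsqrt) (simp add: power2_eq_square)
lemma s2u: "sqrt 2 < (141422/100000::real)" by (rule real_less_lsqrt) (simp_all add: power2_eq_square)
lemma s5l: "(223606/100000::real) < sqrt 5" by (rule real_less_rsqrt) (simp add: power2_eq_square)
lemma s5u: "sqrt 5 < (223607/100000::real)" by (rule real_less_lsqrt) (simp_all add: power2_eq_square)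
lemma s10l: "(316227/100000::real) < sqrt 10" by (rule real_less_rsqrt) (simp add: power2_eq_square)
lemma s13l: "(360555/100000::real) < sqrt 13" by (rule real_less_rsqrt) (simp add: power2_eq_square)

lemma SO_gamma9: assumes "gamma9 n j G"
  shows "SO_red G = real n * sqrt 2 + (5 - 3 * real j) * sqrt 2 + (2 + 2 * real j) * sqrt 5"
proof -
  have C: "CTG n G" using assms unfolding gamma9_def by (elim conjE)
  have i23: "int (me G 2 3) = 2 + 2 * int j" using assms unfolding gamma9_def by (elim conjE)
  have i33: "int (me G 3 3) = 5 - int j" using assms unfolding gamma9_def by (elim conjE)
  have i22: "int (me G 2 2) = int n - 5 - int j" using assms unfolding gamma9_def by (elim conjE)
  have Z0: "\<forall>a b. {a, b} \<notin> {{2,3}, {3,3}, {2,2}} \<longrightarrow> me G a b = 0"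
    using assms unfolding gamma9_def by (elim conjE)
  note Z = Z0[rule_format]
  have sg: "simple_graph G" and ch: "chemical G" using ctg_facts[OF C] by blast+
  have z: "me G 1 2 = 0" "me G 1 3 = 0" "me G 1 4 = 0" "me G 2 4 = 0" "me G 3 4 = 0" "me G 4 4 = 0"
    by (rule Z; simp add: doubleton_eq_iff)+
  have r23: "real (me G 2 3) = 2 + 2 * real j" using arg_cong[OF i23, of real_of_int] by simp
  have r33: "real (me G 3 3) = 5 - real j" using arg_cong[OF i33, of real_of_int] by simp
  have r22: "real (me G 2 2) = real n - 5 - real j" using arg_cong[OF i22, of real_of_int] by simp
  show ?thesis unfolding SO_formula[OF sg ch] z r23 r33 r22 by (simp add: algebra_simps)
qed

lemma SO_gamma65: assumes "gamma65 n G"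
  shows "SO_red G = real n * sqrt 2 + 7 * sqrt 2 + sqrt 5 + 1"
proof -
  have C: "CTG n G" using assms unfolding gamma65_def by (elim conjE)
  have e1: "me G 1 2 = 1" using assms unfolding gamma65_def by (elim conjE)
  have e2: "me G 2 3 = 1" using assms unfolding gamma65_def by (elim conjE)
  have e3: "me G 3 3 = 7" using assms unfolding gamma65_def by (elim conjE)
  note e = e1 e2 e3
  have i22: "int (me G 2 2) = int n - 7" using assms unfolding gamma65_def by (elim conjE)
  have Z0: "\<forall>a b. {a, b} \<notin> {{1,2}, {2,3}, {3,3}, {2,2}} \<longrightarrow> me G a b = 0"
    using assms unfolding gamma65_def by (elim conjE)
  note Z = Z0[rule_format]
  have sg: "simple_graph G" and ch: "chemical G" using ctg_facts[OF C] by blast+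
  have z: "me G 1 3 = 0" "me G 1 4 = 0" "me G 2 4 = 0" "me G 3 4 = 0" "me G 4 4 = 0"
    by (rule Z; simp add: doubleton_eq_iff)+
  have r22: "real (me G 2 2) = real n - 7" using arg_cong[OF i22, of real_of_int] by simp
  show ?thesis unfolding SO_formula[OF sg ch] z e r22 by (simp add: algebra_simps)
qed

lemma me_zero_other:
  assumes sg: "simple_graph G" and ch: "chemical G"
    and P: "\<And>a b. a \<in> {1..4} \<Longrightarrow> b \<in> {1..4} \<Longrightarrow> a \<le> b \<Longrightarrow> {a,b} \<notin> S \<Longrightarrow> me G a b = 0"
    and Ssym: "\<And>a b. {a,b} \<in> S \<longleftrightarrow> {b,a} \<in> S"
    and notin: "{a,b} \<notin> S"
  shows "me G a b = 0"
proof (rule ccontr)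
  assume nz: "me G a b \<noteq> 0"
  then have ab: "a \<in> {1..4}" "b \<in> {1..4}" using me_nz[OF sg ch] by blast+
  show False
  proof (cases "a \<le> b")
    case True then show False using P[OF ab True notin] nz by simp
  next
    case False
    have "{b,a} \<notin> S" using notin Ssym by blast
    then have "me G b a = 0" using P[OF ab(2) ab(1)] False by simp
    then show False using nz me_sym[of G a b] by simp
  qed
qed

lemma mk_gamma9:
  assumes C: "CTG n G" and j: "j \<le> 5"
    and v: "nv G 4 = 0" "nv G 3 = 4" "nv G 2 + 4 = n" "nv G 1 = 0"
    and m: "me G 2 3 = 2 + 2*j" "me G 3 3 + j = 5" "me G 2 2 + 5 + j = n"
    and z: "me G 1 1 = 0" "me G 1 2 = 0" "me G 1 3 = 0" "me G 1 4 = 0" "me G 2 4 = 0" "me G 3 4 = 0" "me G 4 4 = 0"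
  shows "gamma9 n j G"
proof -
  have sg: "simple_graph G" and ch: "chemical G" using ctg_facts[OF C] by blast+
  have Z: "me G a b = 0" if "{a, b} \<notin> {{2,3}, {3,3}, {2,2}}" for a b
  proof (rule me_zero_other[OF sg ch _ _ that])
    fix a b :: nat assume a: "a \<in> {1..4}" and b: "b \<in> {1..4}" and ab: "a \<le> b" and ni: "{a, b} \<notin> {{2,3}, {3,3}, {2,2}}"
    from four[OF a] four[OF b] ab ni z show "me G a b = 0"
      by (elim disjE) (simp_all add: doubleton_eq_iff)
  next
    fix a b :: nat show "({a, b} \<in> {{2,3}, {3,3}, {2,2}}) = ({b, a} \<in> {{2,3}, {3,3}, {2,2}})"
      by (simp add: insert_commute)
  qed
  have i1: "int (nv G 2) = int n - 4" using v(3) by linarith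
  have i2: "int (me G 2 3) = 2 + 2 * int j" using m(1) by simp
  have i3: "int (me G 3 3) = 5 - int j" using m(2) by linarith
  have i4: "int (me G 2 2) = int n - 5 - int j" using m(3) by linarith
  show ?thesis unfolding gamma9_def using C v(1,2,4) i1 i2 i3 i4 Z by blast
qed

lemma mk_gamma65:
  assumes C: "CTG n G"
    and v: "nv G 4 = 0" "nv G 3 = 5" "nv G 2 + 6 = n" "nv G 1 = 1"
    and m: "me G 1 2 = 1" "me G 2 3 = 1" "me G 3 3 = 7" "me G 2 2 + 7 = n"
    and z: "me G 1 1 = 0" "me G 1 3 = 0" "me G 1 4 = 0" "me G 2 4 = 0" "me G 3 4 = 0" "me G 4 4 = 0"
  shows "gamma65 n G"
proof -
  have sg: "simple_graph G" and ch: "chemical G" using ctg_facts[OF C] by blast+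
  have Z: "me G a b = 0" if "{a, b} \<notin> {{1,2}, {2,3}, {3,3}, {2,2}}" for a b
  proof (rule me_zero_other[OF sg ch _ _ that])
    fix a b :: nat assume a: "a \<in> {1..4}" and b: "b \<in> {1..4}" and ab: "a \<le> b" and ni: "{a, b} \<notin> {{1,2}, {2,3}, {3,3}, {2,2}}"
    from four[OF a] four[OF b] ab ni z show "me G a b = 0"
      by (elim disjE) (simp_all add: doubleton_eq_iff)
  next
    fix a b :: nat show "({a, b} \<in> {{1,2}, {2,3}, {3,3}, {2,2}}) = ({b, a} \<in> {{1,2}, {2,3}, {3,3}, {2,2}})"
      by (simp add: insert_commute)
  qed
  have i1: "int (nv G 2) = int n - 6" using v(3) by linarith
  have i4: "int (me G 2 2) = int n - 7" using m(4) by linarith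
  show ?thesis unfolding gamma65_def using C v(1,2,4) m(1,2,3) i1 i4 Z by blast
qed

theorem theorem3p13:
  fixes n :: nat and G1 G2 G3 G4 G5 G6 G7 G :: "'a graph"
  assumes "n \<ge> 6"
    and "gamma9 n 0 G1" and "gamma9 n 1 G2" and "gamma9 n 2 G3"
    and "gamma9 n 3 G4" and "gamma9 n 4 G5" and "gamma9 n 5 G6"
    and "gamma65 n G7"
    and "CTG n G"
    and "\<forall>j\<le>5. \<not> gamma9 n j G" and "\<not> gamma65 n G"
  shows "SO_red G1 < SO_red G2 \<and> SO_red G2 < SO_red G3 \<and> SO_red G3 < SO_red G4 \<and>
         SO_red G4 < SO_red G5 \<and> SO_red G5 < SO_red G6 \<and> SO_red G6 < SO_red G7 \<and>
         SO_red G7 < SO_red G"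
proof -
  have key: "3 * sqrt 2 < 2 * sqrt 5" using s2u s5l by linarith
  have e1: "SO_red G1 = real n * sqrt 2 + 5 * sqrt 2 + 2 * sqrt 5" using SO_gamma9[OF assms(2)] by simp
  have e2: "SO_red G2 = real n * sqrt 2 + 2 * sqrt 2 + 4 * sqrt 5" using SO_gamma9[OF assms(3)] by simp
  have e3: "SO_red G3 = real n * sqrt 2 + (-1) * sqrt 2 + 6 * sqrt 5" using SO_gamma9[OF assms(4)] by simp
  have e4: "SO_red G4 = real n * sqrt 2 + (-4) * sqrt 2 + 8 * sqrt 5" using SO_gamma9[OF assms(5)] by simp
  have e5: "SO_red G5 = real n * sqrt 2 + (-7) * sqrt 2 + 10 * sqrt 5" using SO_gamma9[OF assms(6)] by simp
  have e6: "SO_red G6 = real n * sqrt 2 + (-10) * sqrt 2 + 12 * sqrt 5" using SO_gamma9[OF assms(7)] by simp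
  have e7: "SO_red G7 = real n * sqrt 2 + 7 * sqrt 2 + sqrt 5 + 1" using SO_gamma65[OF assms(8)] .
  have c67: "SO_red G6 < SO_red G7" unfolding e6 e7 using s2l s5u by linarith
  have chain: "SO_red G1 < SO_red G2 \<and> SO_red G2 < SO_red G3 \<and> SO_red G3 < SO_red G4 \<and>
         SO_red G4 < SO_red G5 \<and> SO_red G5 < SO_red G6"
    unfolding e1 e2 e3 e4 e5 e6 using key by linarith
  have last: "SO_red G7 < SO_red G"
  proof (rule ccontr)
    assume "\<not> SO_red G7 < SO_red G"
    then have le: "SO_red G \<le> SO_red G7" by simp
    have C: "CTG n G" using assms(9) .
    have sg: "simple_graph G" and ch: "chemical G" and cg: "connected_graph G"
      and cE: "card (snd G) = n + 2" and cV: "card (fst G) = n" using ctg_facts[OF C] by blast+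
    have V: "n = nv G 1 + nv G 2 + nv G 3 + nv G 4"
      using vert_partition[OF cg ch] cV assms(1) by simp
    have Ec: "n + 2 = me G 1 1 + me G 1 2 + me G 1 3 + me G 1 4 + me G 2 2 + me G 2 3 + me G 2 4
       + me G 3 3 + me G 3 4 + me G 4 4" using cardE_formula[OF sg ch] cE by simp
    note h1 = hand1[OF sg ch] and h2 = hand2[OF sg ch] and h3 = hand3[OF sg ch] and h4 = hand4[OF sg ch]
    have b44: "me G 4 4 \<le> nv G 4 choose 2" by (rule me_le_choose[OF sg])
    have b33: "me G 3 3 \<le> nv G 3 choose 2" by (rule me_le_choose[OF sg])
    have b34: "me G 3 4 \<le> nv G 3 * nv G 4" by (rule me_le_mult[OF sg]) simp
    have c3: "0 < nv G 3 \<Longrightarrow> nv G 3 < n \<Longrightarrow> 1 \<le> me G 1 3 + me G 2 3 + me G 3 4"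
      using conn3[OF cg ch] cV by simp
    have Er: "real n + 2 = (real (me G 1 1)) + (real (me G 1 2)) + (real (me G 1 3)) + (real (me G 1 4)) + (real (me G 2 2)) + (real (me G 2 3)) + (real (me G 2 4)) + (real (me G 3 3)) + (real (me G 3 4)) + (real (me G 4 4))"
      using arg_cong[OF Ec, of real] by simp
    have Vr: "real n = real (nv G 1) + real (nv G 2) + real (nv G 3) + real (nv G 4)"
      using arg_cong[OF V, of real] by simp
    have hr1: "real (nv G 1) = 2 * (real (me G 1 1)) + (real (me G 1 2)) + (real (me G 1 3)) + (real (me G 1 4))" using arg_cong[OF h1, of real] by simp
    have hr2: "2 * real (nv G 2) = (real (me G 1 2)) + 2 * (real (me G 2 2)) + (real (me G 2 3)) + (real (me G 2 4))" using arg_cong[OF h2, of real] by simp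
    have hr3: "3 * real (nv G 3) = (real (me G 1 3)) + (real (me G 2 3)) + 2 * (real (me G 3 3)) + (real (me G 3 4))" using arg_cong[OF h3, of real] by simp
    have hr4: "4 * real (nv G 4) = (real (me G 1 4)) + (real (me G 2 4)) + (real (me G 3 4)) + 2 * (real (me G 4 4))" using arg_cong[OF h4, of real] by simp
    have lin: "real (me G 3 3) = 6 + 3 * real (me G 1 1) + 3/2 * real (me G 1 2) + real (me G 1 3) + 3/4 * real (me G 1 4) - 1/2 * real (me G 2 3) - 3/4 * real (me G 2 4) - 5/4 * real (me G 3 4) - 3/2 * real (me G 4 4)"
      using Er Vr hr1 hr2 hr3 hr4 by linarith
    have nsub: "real n = (real (me G 1 1)) + (real (me G 1 2)) + (real (me G 1 3)) + (real (me G 1 4)) + (real (me G 2 2)) + (real (me G 2 3)) + (real (me G 2 4)) + (real (me G 3 3)) + (real (me G 3 4)) + (real (me G 4 4)) - 2"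
      using Er by linarith
    have ident: "SO_red G = real n * sqrt 2 + 8 * sqrt 2 + ((real (me G 1 1)) * (2 * sqrt 2) + (real (me G 1 2)) * (1 + sqrt 2 / 2)
       + (real (me G 1 3)) * 2 + (real (me G 1 4)) * (3 - sqrt 2 / 4) + (real (me G 2 3)) * (sqrt 5 - 3 / 2 * sqrt 2)
       + (real (me G 2 4)) * (sqrt 10 - 7 / 4 * sqrt 2) + (real (me G 3 4)) * (sqrt 13 - 9 / 4 * sqrt 2) + (real (me G 4 4)) * (sqrt 2 / 2))"
      unfolding SO_formula[OF sg ch] nsub lin by (simp add: algebra_simps)
    have B11: "(real (me G 1 1)) * (2 * sqrt 2) \<ge> (real (me G 1 1)) * (2828/1000)" by (rule mult_left_mono) (use s2l in auto)
    have B12: "(real (me G 1 2)) * (1 + sqrt 2 / 2) \<ge> (real (me G 1 2)) * (1707/1000)" by (rule mult_left_mono) (use s2l in auto)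
    have B14: "(real (me G 1 4)) * (3 - sqrt 2 / 4) \<ge> (real (me G 1 4)) * (2646/1000)" by (rule mult_left_mono) (use s2u in auto)
    have B23: "(real (me G 2 3)) * (sqrt 5 - 3 / 2 * sqrt 2) \<ge> (real (me G 2 3)) * (114/1000)" by (rule mult_left_mono) (use s2u s5l in auto)
    have B24: "(real (me G 2 4)) * (sqrt 10 - 7 / 4 * sqrt 2) \<ge> (real (me G 2 4)) * (687/1000)" by (rule mult_left_mono) (use s2u s10l in auto)
    have B34: "(real (me G 3 4)) * (sqrt 13 - 9 / 4 * sqrt 2) \<ge> (real (me G 3 4)) * (423/1000)" by (rule mult_left_mono) (use s2u s13l in auto)
    have B44: "(real (me G 4 4)) * (sqrt 2 / 2) \<ge> (real (me G 4 4)) * (707/1000)" by (rule mult_left_mono) (use s2l in auto)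
    have X: "(real (me G 1 1)) * (2828/1000) + (real (me G 1 2)) * (1707/1000) + (real (me G 1 3)) * 2 + (real (me G 1 4)) * (2646/1000) + (real (me G 2 3)) * (114/1000)
       + (real (me G 2 4)) * (687/1000) + (real (me G 3 4)) * (423/1000) + (real (me G 4 4)) * (707/1000) \<le> 1822/1000"
      using ident le e7 B11 B12 B14 B23 B24 B34 B44 s2l s5u by linarith
    have "real (2828 * me G 1 1 + 1707 * me G 1 2 + 2000 * me G 1 3 + 2646 * me G 1 4 + 114 * me G 2 3
       + 687 * me G 2 4 + 423 * me G 3 4 + 707 * me G 4 4) \<le> real (1822::nat)"
      using X by simp
    then have W: "2828 * me G 1 1 + 1707 * me G 1 2 + 2000 * me G 1 3 + 2646 * me G 1 4 + 114 * me G 2 3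
       + 687 * me G 2 4 + 423 * me G 3 4 + 707 * me G 4 4 \<le> 1822"
      by (simp only: of_nat_le_iff)
    from core[OF V Ec assms(1) h1 h2 h3 h4 b44 b34 b33 c3 W]
    show False
    proof
      assume "\<exists>j\<le>5. nv G 4 = 0 \<and> nv G 3 = 4 \<and> nv G 2 + 4 = n \<and> nv G 1 = 0 \<and> me G 2 3 = 2 + 2 * j \<and>
        me G 3 3 + j = 5 \<and> me G 2 2 + 5 + j = n \<and> me G 1 1 = 0 \<and> me G 1 2 = 0 \<and> me G 1 3 = 0 \<and>
        me G 1 4 = 0 \<and> me G 2 4 = 0 \<and> me G 3 4 = 0 \<and> me G 4 4 = 0"
      then obtain j where "j \<le> 5" "nv G 4 = 0" "nv G 3 = 4" "nv G 2 + 4 = n" "nv G 1 = 0" "me G 2 3 = 2 + 2 * j"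
        "me G 3 3 + j = 5" "me G 2 2 + 5 + j = n" "me G 1 1 = 0" "me G 1 2 = 0" "me G 1 3 = 0"
        "me G 1 4 = 0" "me G 2 4 = 0" "me G 3 4 = 0" "me G 4 4 = 0" by blast
      then have "gamma9 n j G" by (intro mk_gamma9[OF C])
      then show False using assms(10) \<open>j \<le> 5\<close> by blast
    next
      assume "nv G 4 = 0 \<and> nv G 3 = 5 \<and> nv G 2 + 6 = n \<and> nv G 1 = 1 \<and> me G 1 2 = 1 \<and> me G 2 3 = 1 \<and>
        me G 3 3 = 7 \<and> me G 2 2 + 7 = n \<and> me G 1 1 = 0 \<and> me G 1 3 = 0 \<and> me G 1 4 = 0 \<and>
        me G 2 4 = 0 \<and> me G 3 4 = 0 \<and> me G 4 4 = 0"
      then have "gamma65 n G" by (intro mk_gamma65[OF C]) (elim conjE; assumption)+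
      then show False using assms(11) by blast
    qed
  qed
  show ?thesis using chain c67 last by blast
qed
end
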